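(* Let $s>0$, $\gamma\ge0$, $u>0$, and $\nu_0,\nu_1\ge0$ with $\nu_0+\nu_1=1$. Let $(\mathscr T(t))_{t\ge0}$ be the stratified ASG process, and let $y(\cdot;y_0)$ solve $$\dot y=-y(1-y)[s+\gamma(1-y)]+u\nu_1(1-y)-u\nu_0y,\qquad y(0)=y_0 .$$ Then $$\mathcal H\big(\mathcal T,y(t;y_0)\big)=\mathbb E_{\mathcal T}\big[\mathcal H(\mathscr T(t),y_0)\big]\qquad\text{for all } y_0\in[0,1],\ \mathcal T\in\Upsilon_\Delta,\ t\ge0.$$ In particular, $y(t;y_0)=\mathbb E_{[1]}\big[\mathcal H(\mathscr T(t),y_0)\big]$ for all $t\ge0$ and $y_0\in[0,1]$.
   Context: A weighted ternary tree is a pair $(\tau,m)$. Here $\tau$ is a finite rooted tree in which every internal vertex has exactly three children, labelled left, middle and right (a single vertex is allowed). The map $m$ assigns a weight in $\mathbb N_0$ to each leaf. $\Upsilon$ is the set of weighted ternary trees, $\Delta$ is an extra cemetery state, and $\Upsilon_\Delta=\Upsilon\cup\{\Delta\}$. $[n]$ denotes the tree consisting of a single vertex of weight $n$. For $\mathcal T=(\tau,m)\in\Upsilon$ and a leaf $\ell$, define four operations: - ($\mathcal T^\ell_{\rm bin}$) Increase $m(\ell)$ by 1. - ($\mathcal T^\ell_{\rm ter}$) Attach three children to $\ell$. The left child gets weight $m(\ell)$, and the middle and right children get weight 1. - ($\mathcal T^\ell_\times$) If $m(\ell)>1$, or $\ell$ is the root, or $m(\ell)=1$ and $\ell$ is a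 left child, decrease $m(\ell)$ by 1. If $m(\ell)=1$ and $\ell$ is a middle or right child, proceed as follows. Let $b_\ell$ be the closest strict ancestor of $\ell$ that is either the root, or a left child, or has a left child whose subtree has positive total weight. Then replace the subtree rooted at $b_\ell$ by the subtree rooted at the left child of $b_\ell$, keeping all weights. - ($\mathcal T^\ell_\circ$) Let $\mu^\star$ be the first vertex on the path from $\ell$ to the root (starting with $\ell$) that is not a left child; the root counts as such a vertex. If $\mu^\star$ is the root, the result is $\Delta$. Otherwise, let $p$ be the parent of $\mu^\star$, and let $v,w$ be the other two children of $p$, with $v$ to the left of $w$. Remove the subtree rooted at $\mu^\star$. Replace the leftmost leaf $\ell_v$ of the subtree at $v$ by the whole subtree at $w$, giving the leftmost leaf of the latter the weight $m(\ell_v)+m(\ell_w)$, where $\ell_w$ is the leftmost leaf of the subtree at $w$. Finally, replace the subtree at $p$ by the resulting subtree at $v$. The stratified ASG process $\mathscr T$ is the continuous-time Markov chain on $\Upsilon_\Delta$ which, from $(\tau,m)$, jumps for each leaf $\ell$ to $\mathcal T^\ell_{\rm bin}$ at rate $s\,m(\ell)$, to $\mathcal T^\ell_{\rm ter}$ at rate $\gamma\,m(\ell)$, to $\mathcal T^\ell_\times$ at rate $u\nu_1 m(\ell)$, and to $\mathcal T^\ell_\circ$ at rate $u\nu_0 m(\ell)$. The states $[0]$ and $\Delta$ are absorbing. For $\mathcal T=(\tau,m)\in\Upsilon$ and $y_0\in[0,1]$, $\mathcal H(\mathcal T,y_0)$ is the probability that the root gets type 1. Here each leaf $\ell$ independently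 gets type 1 with probability $y_0^{m(\ell)}$ (with $y_0^0=1$) and type 0 otherwise, and an internal vertex has type 1 iff its left child has type 1 and at least one of its middle and right children has type 1. Also $\mathcal H(\Delta,y_0)=0$. *)

theory Defs
  imports "HOL-Analysis.Analysis"
begin

datatype dir = DL | DM | DR

datatype wtree = Leaf nat | Node wtree wtree wtree

text \<open>States of the process: Some T for a tree T, None for the cemetery state Delta.\<close>
type_synonym state = "wtree option"

fun subtree :: "wtree \<Rightarrow> dir list \<Rightarrow> wtree" where
  "subtree T [] = T"
| "subtree (Node a b c) (DL # p) = subtree a p"
| "subtree (Node a b c) (DM # p) = subtree b p"
| "subtree (Node a b c) (DR # p) = subtree c p"
| "subtree (Leaf n) (d # p) = Leaf n"

fun replace_at :: "dir list \<Rightarrow> wtree \<Rightarrow> wtree \<Rightarrow> wtree" where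
  "replace_at [] S T = S"
| "replace_at (DL # p) S (Node a b c) = Node (replace_at p S a) b c"
| "replace_at (DM # p) S (Node a b c) = Node a (replace_at p S b) c"
| "replace_at (DR # p) S (Node a b c) = Node a b (replace_at p S c)"
| "replace_at (d # p) S (Leaf n) = Leaf n"

fun leaf_paths :: "wtree \<Rightarrow> dir list list" where
  "leaf_paths (Leaf n) = [[]]"
| "leaf_paths (Node a b c) =
     map ((#) DL) (leaf_paths a) @ map ((#) DM) (leaf_paths b) @ map ((#) DR) (leaf_paths c)"

fun leaf_weights :: "wtree \<Rightarrow> nat list" where
  "leaf_weights (Leaf n) = [n]"
| "leaf_weights (Node a b c) = leaf_weights a @ leaf_weights b @ leaf_weights c"

fun nleaves :: "wtree \<Rightarrow> nat" where
  "nleaves (Leaf n) = 1"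
| "nleaves (Node a b c) = nleaves a + nleaves b + nleaves c"

fun total_weight :: "wtree \<Rightarrow> nat" where
  "total_weight (Leaf n) = n"
| "total_weight (Node a b c) = total_weight a + total_weight b + total_weight c"

definition weight_at :: "wtree \<Rightarrow> dir list \<Rightarrow> nat" where
  "weight_at T p = (case subtree T p of Leaf n \<Rightarrow> n | Node _ _ _ \<Rightarrow> 0)"

definition op_bin :: "wtree \<Rightarrow> dir list \<Rightarrow> wtree" where
  "op_bin T p = replace_at p (Leaf (weight_at T p + 1)) T"

definition op_ter :: "wtree \<Rightarrow> dir list \<Rightarrow> wtree" where
  "op_ter T p = replace_at p (Node (Leaf (weight_at T p)) (Leaf 1) (Leaf 1)) T"

definition anc_ok :: "wtree \<Rightarrow> dir list \<Rightarrow> bool" where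
  "anc_ok T q \<longleftrightarrow> q = [] \<or> last q = DL \<or> 0 < total_weight (subtree T (q @ [DL]))"

text \<open>For weight 0 at a non-root leaf the operation is not specified in the paper; it is
  never used (rate 0). We let it act as the (saturating) decrement, i.e. identity.\<close>
definition op_times :: "wtree \<Rightarrow> dir list \<Rightarrow> wtree" where
  "op_times T p =
    (let m = weight_at T p in
     if m \<noteq> 1 \<or> p = [] \<or> last p = DL then replace_at p (Leaf (m - 1)) T
     else (let k = (GREATEST k. k < length p \<and> anc_ok T (take k p));
               b = take k p
           in replace_at b (subtree T (b @ [DL])) T))"

fun add_leftmost :: "nat \<Rightarrow> wtree \<Rightarrow> wtree" where
  "add_leftmost n (Leaf k) = Leaf (n + k)"
| "add_leftmost n (Node a b c) = Node (add_leftmost n a) b c"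

fun graft :: "wtree \<Rightarrow> wtree \<Rightarrow> wtree" where
  "graft (Leaf n) W = add_leftmost n W"
| "graft (Node a b c) W = Node (graft a W) b c"

definition op_circ :: "wtree \<Rightarrow> dir list \<Rightarrow> state" where
  "op_circ T p =
    (let k = (GREATEST k. k \<le> length p \<and> (k = 0 \<or> last (take k p) \<noteq> DL)) in
     if k = 0 then None
     else (let par = take (k - 1) p; d = p ! (k - 1);
               Tv = subtree T (par @ [DL]);
               Tw = subtree T (par @ [if d = DM then DR else DM])
           in Some (replace_at par (graft Tv Tw) T)))"

fun transitions :: "real \<Rightarrow> real \<Rightarrow> real \<Rightarrow> real \<Rightarrow> real \<Rightarrow> state \<Rightarrow> (real \<times> state) list" where
  "transitions s \<gamma> u \<nu>0 \<nu>1 None = []"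
| "transitions s \<gamma> u \<nu>0 \<nu>1 (Some T) =
     concat (map (\<lambda>p. let m = real (weight_at T p) in
        [(s * m, Some (op_bin T p)), (\<gamma> * m, Some (op_ter T p)),
         (u * \<nu>1 * m, Some (op_times T p)), (u * \<nu>0 * m, op_circ T p)]) (leaf_paths T))"

definition total_rate :: "real \<Rightarrow> real \<Rightarrow> real \<Rightarrow> real \<Rightarrow> real \<Rightarrow> state \<Rightarrow> real" where
  "total_rate s \<gamma> u \<nu>0 \<nu>1 X = sum_list (map fst (transitions s \<gamma> u \<nu>0 \<nu>1 X))"

text \<open>jump_part n g t X = E_X[ g(X_t) ; exactly n jumps up to time t ], defined via the
  first-jump decomposition of the (minimal) continuous-time Markov chain.\<close>
fun jump_part :: "real \<Rightarrow> real \<Rightarrow> real \<Rightarrow> real \<Rightarrow> real \<Rightarrow> nat \<Rightarrow> (state \<Rightarrow> real) \<Rightarrow> real \<Rightarrow> state \<Rightarrow> real" where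
  "jump_part s \<gamma> u \<nu>0 \<nu>1 0 g t X = exp (- total_rate s \<gamma> u \<nu>0 \<nu>1 X * t) * g X"
| "jump_part s \<gamma> u \<nu>0 \<nu>1 (Suc n) g t X =
     integral {0..t} (\<lambda>r. exp (- total_rate s \<gamma> u \<nu>0 \<nu>1 X * r) *
        sum_list (map (\<lambda>(a, Y). a * jump_part s \<gamma> u \<nu>0 \<nu>1 n g (t - r) Y)
                      (transitions s \<gamma> u \<nu>0 \<nu>1 X)))"

definition expect :: "real \<Rightarrow> real \<Rightarrow> real \<Rightarrow> real \<Rightarrow> real \<Rightarrow> (state \<Rightarrow> real) \<Rightarrow> real \<Rightarrow> state \<Rightarrow> real" where
  "expect s \<gamma> u \<nu>0 \<nu>1 g t X = (\<Sum>n. jump_part s \<gamma> u \<nu>0 \<nu>1 n g t X)"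

text \<open>Type of the root given the types of the leaves (left to right).\<close>
fun eval_type :: "wtree \<Rightarrow> bool list \<Rightarrow> bool" where
  "eval_type (Leaf n) bs = hd bs"
| "eval_type (Node a b c) bs =
     (eval_type a (take (nleaves a) bs) \<and>
      (eval_type b (take (nleaves b) (drop (nleaves a) bs)) \<or>
       eval_type c (drop (nleaves a + nleaves b) bs)))"

definition H_tree :: "wtree \<Rightarrow> real \<Rightarrow> real" where
  "H_tree T y0 =
    (\<Sum>bs\<in>{bs. length bs = nleaves T}.
       if eval_type T bs
       then (\<Prod>i<nleaves T. if bs ! i then y0 ^ (leaf_weights T ! i)
                                       else 1 - y0 ^ (leaf_weights T ! i))
       else 0)"

fun H :: "state \<Rightarrow> real \<Rightarrow> real" where
  "H None y0 = 0"
| "H (Some T) y0 = H_tree T y0"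

end

theory Submission
  imports Defs
begin

definition comb :: "real \<Rightarrow> real \<Rightarrow> real" where "comb b c = b + c - b * c"

fun Hrec :: "wtree \<Rightarrow> real \<Rightarrow> real" where
  "Hrec (Leaf n) y = y ^ n"
| "Hrec (Node a b c) y = Hrec a y * comb (Hrec b y) (Hrec c y)"

fun Hrep :: "wtree \<Rightarrow> dir list \<Rightarrow> real \<Rightarrow> real \<Rightarrow> real" where
  "Hrep T [] z y = z"
| "Hrep (Leaf n) (d # p) z y = y ^ n"
| "Hrep (Node a b c) (DL # p) z y = Hrep a p z y * comb (Hrec b y) (Hrec c y)"
| "Hrep (Node a b c) (DM # p) z y = Hrec a y * comb (Hrep b p z y) (Hrec c y)"
| "Hrep (Node a b c) (DR # p) z y = Hrec a y * comb (Hrec b y) (Hrep c p z y)"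

lemma Hrec_replace: "Hrec (replace_at p S T) y = Hrep T p (Hrec S y) y"
proof (induction T arbitrary: p)
  case (Leaf n) then show ?case by (cases p) auto
next
  case (Node a b c) then show ?case
    by (cases p; (case_tac "hd p")) (auto simp: neq_Nil_conv)
qed

lemma Hrep_affine_ex: "\<exists>A B. \<forall>z. Hrep T p z y = A + z * B"
proof (induction T arbitrary: p)
  case (Leaf n) then show ?case
    by (cases p) (rule_tac x=0 in exI, rule_tac x=1 in exI, simp,
                  rule_tac x="y^n" in exI, rule_tac x=0 in exI, simp)
next
  case (Node a b c)
  show ?case
  proof (cases p)
    case Nil then show ?thesis by (rule_tac x=0 in exI, rule_tac x=1 in exI) simp
  next
    case (Cons d q)
    obtain A1 B1 where 1: "\<forall>z. Hrep a q z y = A1 + z * B1" using Node.IH by blast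
    obtain A2 B2 where 2: "\<forall>z. Hrep b q z y = A2 + z * B2" using Node.IH by blast
    obtain A3 B3 where 3: "\<forall>z. Hrep c q z y = A3 + z * B3" using Node.IH by blast
    show ?thesis
    proof (cases d)
      case DL then show ?thesis using Cons 1
        by (rule_tac x="A1 * comb (Hrec b y) (Hrec c y)" in exI,
            rule_tac x="B1 * comb (Hrec b y) (Hrec c y)" in exI) (simp add: algebra_simps)
    next
      case DM then show ?thesis using Cons 2
        by (rule_tac x="Hrec a y * comb A2 (Hrec c y)" in exI,
            rule_tac x="Hrec a y * B2 * (1 - Hrec c y)" in exI) (simp add: comb_def algebra_simps)
    next
      case DR then show ?thesis using Cons 3
        by (rule_tac x="Hrec a y * comb (Hrec b y) A3" in exI,
            rule_tac x="Hrec a y * B3 * (1 - Hrec b y)" in exI) (simp add: comb_def algebra_simps)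
    qed
  qed
qed

lemma Hrep_affine: "Hrep T p z y = Hrep T p 0 y + z * (Hrep T p 1 y - Hrep T p 0 y)"
proof -
  obtain A B where "\<forall>z. Hrep T p z y = A + z * B" using Hrep_affine_ex by blast
  then show ?thesis by simp
qed

lemma weight_at_simps[simp]:
  "weight_at (Leaf n) [] = n"
  "weight_at (Node a b c) (DL # p) = weight_at a p"
  "weight_at (Node a b c) (DM # p) = weight_at b p"
  "weight_at (Node a b c) (DR # p) = weight_at c p"
  by (simp_all add: weight_at_def)

lemma Hrep_leaf: "p \<in> set (leaf_paths T) \<Longrightarrow> Hrep T p (y ^ weight_at T p) y = Hrec T y"
  by (induction T arbitrary: p) auto

lemma Hrep_append: "Hrep T (q @ r) z y = Hrep T q (Hrep (subtree T q) r z y) y"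
proof (induction T arbitrary: q)
  case (Leaf n) then show ?case by (cases q) auto
next
  case (Node a b c)
  show ?case
  proof (cases q)
    case Nil then show ?thesis by simp
  next
    case (Cons d q') then show ?thesis
      using Node.IH by (cases d) simp_all
  qed
qed

lemma Hrec_add_leftmost: "Hrec (add_leftmost n W) y = y ^ n * Hrec W y"
  by (induction W) (auto simp: power_add)

lemma Hrec_graft: "Hrec (graft V W) y = Hrec V y * Hrec W y"
  by (induction V) (auto simp: Hrec_add_leftmost)

lemma Hrec_zero_weight: "total_weight T = 0 \<Longrightarrow> Hrec T y = 1"
  by (induction T) (auto simp: comb_def)


definition pr :: "real \<Rightarrow> bool \<Rightarrow> nat \<Rightarrow> real" where
  "pr y b w = (if b then y ^ w else 1 - y ^ w)"

lemma prod_nth_map2: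
  "length bs = length ws \<Longrightarrow> (\<Prod>i<length ws. f (bs ! i) (ws ! i)) = prod_list (map2 f bs ws)"
proof (induction ws arbitrary: bs)
  case Nil then show ?case by simp
next
  case (Cons w ws) then show ?case
    by (cases bs) (auto simp del: prod.lessThan_Suc simp add: prod.lessThan_Suc_shift)
qed

lemma lists_len_append:
  "{bs. length bs = na + nb} = (\<lambda>(a,b). a @ b) ` ({a. length a = na} \<times> {b. length b = (nb::nat)})"
proof (rule set_eqI, rule iffI)
  fix bs :: "'a list" assume "bs \<in> {bs. length bs = na + nb}"
  then show "bs \<in> (\<lambda>(a,b). a @ b) ` ({a. length a = na} \<times> {b. length b = nb})"
    by (rule_tac x="(take na bs, drop na bs)" in image_eqI) auto
qed auto

lemma sum_split:
  "(\<Sum>bs\<in>{bs. length bs = na + nb}. F bs) =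
   (\<Sum>b1\<in>{bs. length bs = na}. \<Sum>b2\<in>{bs::'a::finite list. length bs = nb}. (F (b1 @ b2) :: real))"
proof -
  have inj: "inj_on (\<lambda>(a,b). a @ b) ({a::'a list. length a = na} \<times> {b. length b = nb})"
    by (auto simp: inj_on_def)
  have "(\<Sum>bs\<in>{bs. length bs = na + nb}. F bs) =
        (\<Sum>x\<in>{a::'a list. length a = na} \<times> {b. length b = nb}. F ((\<lambda>(a,b). a @ b) x))"
    unfolding lists_len_append by (rule sum.reindex[OF inj, unfolded comp_def])
  also have "\<dots> = (\<Sum>b1\<in>{bs. length bs = na}. \<Sum>b2\<in>{bs. length bs = nb}. F (b1 @ b2))"
    by (subst sum.cartesian_product) (simp add: split_def)
  finally show ?thesis .
qed

lemma lena_lists: "{bs::bool list. length bs = Suc 0} = {[True], [False]}"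
  by (auto simp: length_Suc_conv)

lemma sum_pr_one: "(\<Sum>bs\<in>{bs. length bs = length ws}. prod_list (map2 (pr y) bs ws)) = 1"
proof (induction ws)
  case Nil then show ?case by simp
next
  case (Cons w ws)
  have "(\<Sum>bs\<in>{bs. length bs = length (w # ws)}. prod_list (map2 (pr y) bs (w # ws)))
      = (\<Sum>b1\<in>{bs. length bs = 1}. \<Sum>b2\<in>{bs::bool list. length bs = length ws}.
           prod_list (map2 (pr y) (b1 @ b2) (w # ws)))"
    using sum_split[where na=1 and nb="length ws"] by simp
  also have "\<dots> = (\<Sum>b2\<in>{bs::bool list. length bs = length ws}. prod_list (map2 (pr y) b2 ws))"
    by (simp add: lena_lists pr_def sum.distrib[symmetric] algebra_simps)
  finally show ?case using Cons by simp
qed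

lemma length_leaf_weights: "length (leaf_weights T) = nleaves T"
  by (induction T) auto

lemma nleaves_pos: "nleaves T > 0"
  by (induction T) auto

definition Hs :: "wtree \<Rightarrow> real \<Rightarrow> real" where
  "Hs T y = (\<Sum>bs\<in>{bs. length bs = nleaves T}.
      if eval_type T bs then prod_list (map2 (pr y) bs (leaf_weights T)) else 0)"

lemma H_tree_Hs: "H_tree T y = Hs T y"
  unfolding H_tree_def Hs_def
  by (rule sum.cong[OF refl])
     (simp add: prod_nth_map2[symmetric] length_leaf_weights pr_def)

lemma map2_append3:
  "length b1 = length w1 \<Longrightarrow> length b2 = length w2 \<Longrightarrow>
   prod_list (map2 f (b1 @ b2 @ b3) (w1 @ w2 @ w3)) =
   prod_list (map2 f b1 w1) * prod_list (map2 f b2 w2) * prod_list (map2 f b3 w3)"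
  by (simp add: mult.assoc)

lemma triple_sum_alg:
  fixes ea pa eb pb ec pc :: "'x \<Rightarrow> real"
  shows "(\<Sum>x\<in>A. \<Sum>y\<in>B. \<Sum>z\<in>C. ea x * pa x * ((eb y + ec z - eb y * ec z) * pb y * pc z)) =
   (\<Sum>x\<in>A. ea x * pa x) * ((\<Sum>y\<in>B. eb y * pb y) * (\<Sum>z\<in>C. pc z)
       + (\<Sum>y\<in>B. pb y) * (\<Sum>z\<in>C. ec z * pc z)
       - (\<Sum>y\<in>B. eb y * pb y) * (\<Sum>z\<in>C. ec z * pc z))"
proof -
  have "\<And>y z. (eb y + ec z - eb y * ec z) * pb y * pc z =
      (eb y * pb y) * pc z + pb y * (ec z * pc z) - (eb y * pb y) * (ec z * pc z)"
    by (simp add: algebra_simps)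
  then have "\<And>y. (\<Sum>z\<in>C. (eb y + ec z - eb y * ec z) * pb y * pc z) =
      (eb y * pb y) * (\<Sum>z\<in>C. pc z) + pb y * (\<Sum>z\<in>C. ec z * pc z)
        - (eb y * pb y) * (\<Sum>z\<in>C. ec z * pc z)"
    by (simp add: sum.distrib sum_subtractf sum_distrib_left)
  then have "(\<Sum>y\<in>B. \<Sum>z\<in>C. (eb y + ec z - eb y * ec z) * pb y * pc z) =
      (\<Sum>y\<in>B. eb y * pb y) * (\<Sum>z\<in>C. pc z)
       + (\<Sum>y\<in>B. pb y) * (\<Sum>z\<in>C. ec z * pc z)
       - (\<Sum>y\<in>B. eb y * pb y) * (\<Sum>z\<in>C. ec z * pc z)"
    by (simp add: sum.distrib sum_subtractf sum_distrib_right)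
  then show ?thesis
    by (simp add: sum_distrib_left[symmetric] sum_distrib_right[symmetric])
qed

lemma Hs_Hrec: "Hs T y = Hrec T y"
proof (induction T)
  case (Leaf n)
  show ?case by (simp add: Hs_def lena_lists pr_def)
next
  case (Node a b c)
  let ?na = "nleaves a" and ?nb = "nleaves b" and ?nc = "nleaves c"
  let ?P = "\<lambda>T bs. prod_list (map2 (pr y) bs (leaf_weights T))"
  let ?E = "\<lambda>T bs. if eval_type T bs then 1 else (0::real)"
  have sa: "(\<Sum>bs\<in>{bs. length bs = ?na}. ?P a bs) = 1"
    using sum_pr_one[where ws="leaf_weights a" and y=y] by (simp add: length_leaf_weights)
  have sb: "(\<Sum>bs\<in>{bs. length bs = ?nb}. ?P b bs) = 1"
    using sum_pr_one[where ws="leaf_weights b" and y=y] by (simp add: length_leaf_weights)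
  have sc: "(\<Sum>bs\<in>{bs. length bs = ?nc}. ?P c bs) = 1"
    using sum_pr_one[where ws="leaf_weights c" and y=y] by (simp add: length_leaf_weights)
  have ha: "Hrec a y = (\<Sum>bs\<in>{bs. length bs = ?na}. ?E a bs * ?P a bs)"
    unfolding Node.IH(1)[symmetric] Hs_def by (rule sum.cong) auto
  have hb: "Hrec b y = (\<Sum>bs\<in>{bs. length bs = ?nb}. ?E b bs * ?P b bs)"
    unfolding Node.IH(2)[symmetric] Hs_def by (rule sum.cong) auto
  have hc: "Hrec c y = (\<Sum>bs\<in>{bs. length bs = ?nc}. ?E c bs * ?P c bs)"
    unfolding Node.IH(3)[symmetric] Hs_def by (rule sum.cong) auto
  have "Hs (Node a b c) y = (\<Sum>b1\<in>{bs. length bs = ?na}. \<Sum>b2\<in>{bs. length bs = ?nb}.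
          \<Sum>b3\<in>{bs. length bs = ?nc}.
          ?E a b1 * ?P a b1 * ((?E b b2 + ?E c b3 - ?E b b2 * ?E c b3) * ?P b b2 * ?P c b3))"
    unfolding Hs_def nleaves.simps
    apply (subst add.assoc)
    apply (subst sum_split)
    apply (rule sum.cong[OF refl])
    apply (subst sum_split)
    apply (rule sum.cong[OF refl])
    apply (rule sum.cong[OF refl])
    apply (simp add: map2_append3 length_leaf_weights)
    done
  also have "\<dots> = (\<Sum>b1\<in>{bs. length bs = ?na}. ?E a b1 * ?P a b1) *
        ((\<Sum>b2\<in>{bs. length bs = ?nb}. ?E b b2 * ?P b b2) * (\<Sum>b3\<in>{bs. length bs = ?nc}. ?P c b3)
       + (\<Sum>b2\<in>{bs. length bs = ?nb}. ?P b b2) * (\<Sum>b3\<in>{bs. length bs = ?nc}. ?E c b3 * ?P c b3)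
       - (\<Sum>b2\<in>{bs. length bs = ?nb}. ?E b b2 * ?P b b2) * (\<Sum>b3\<in>{bs. length bs = ?nc}. ?E c b3 * ?P c b3))"
    by (rule triple_sum_alg)
  also have "\<dots> = Hrec (Node a b c) y"
    using sb sc by (simp add: ha[symmetric] hb[symmetric] hc[symmetric] comb_def)
  finally show ?case .
qed

lemma H_tree_Hrec: "H_tree T y = Hrec T y"
  by (simp add: H_tree_Hs Hs_Hrec)


lemma subtree_append: "subtree T (q @ r) = subtree (subtree T q) r"
proof (induction T arbitrary: q)
  case (Leaf n) then show ?case by (cases q; cases r) auto
next
  case (Node a b c) then show ?case by (cases q; case_tac "hd q") (auto simp: neq_Nil_conv)
qed

lemma leaf_path_split: "q @ r \<in> set (leaf_paths T) \<Longrightarrow> r \<in> set (leaf_paths (subtree T q))"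
proof (induction T arbitrary: q)
  case (Leaf n) then show ?case by (cases q) auto
next
  case (Node a b c) then show ?case by (cases q; case_tac "hd q") (auto simp: neq_Nil_conv)
qed

lemma leaf_path_Cons: "e # r \<in> set (leaf_paths U) \<Longrightarrow>
   \<exists>a b c. U = Node a b c \<and> r \<in> set (leaf_paths (subtree U [e]))"
  by (cases U; cases e) auto

lemma subtree_leaf: "p \<in> set (leaf_paths T) \<Longrightarrow> subtree T p = Leaf (weight_at T p)"
  by (induction T arbitrary: p) auto

lemma Hrec_op_bin: "Hrec (op_bin T p) y = Hrep T p (y ^ (weight_at T p + 1)) y"
  by (simp add: op_bin_def Hrec_replace)

lemma Hrec_op_ter: "Hrec (op_ter T p) y = Hrep T p (y ^ weight_at T p * comb y y) y"
  by (simp add: op_ter_def Hrec_replace)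

lemma Hrep_all_DL_zero:
  "\<forall>e\<in>set p. e = DL \<Longrightarrow> p \<in> set (leaf_paths T) \<Longrightarrow> Hrep T p 0 y = 0"
  by (induction T arbitrary: p) auto

lemma Hrep_one:
  "r \<in> set (leaf_paths V) \<Longrightarrow>
   (\<forall>q e q'. r = q @ e # q' \<longrightarrow> e \<noteq> DL \<and> total_weight (subtree V (q @ [DL])) = 0) \<Longrightarrow>
   Hrep V r 1 y = 1"
proof (induction r arbitrary: V)
  case Nil then show ?case by simp
next
  case (Cons e r)
  obtain a b c where V: "V = Node a b c" and r: "r \<in> set (leaf_paths (subtree V [e]))"
    using leaf_path_Cons[OF Cons.prems(1)] by blast
  have e: "e \<noteq> DL" and a: "total_weight a = 0"
    using Cons.prems(2)[rule_format, of "[]" e r] V by auto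
  have IH: "Hrep (subtree V [e]) r 1 y = 1"
  proof (rule Cons.IH[OF r], intro allI impI)
    fix q e' q' assume "r = q @ e' # q'"
    then show "e' \<noteq> DL \<and> total_weight (subtree (subtree V [e]) (q @ [DL])) = 0"
      using Cons.prems(2)[rule_format, of "e # q" e' q'] by (simp add: subtree_append[symmetric])
  qed
  show ?case using V e IH Hrec_zero_weight[OF a] by (cases e) (auto simp: comb_def)
qed

lemma Hrec_op_times:
  assumes p: "p \<in> set (leaf_paths T)"
  shows "Hrec (op_times T p) y = Hrep T p (y ^ (weight_at T p - 1)) y"
proof (cases "weight_at T p \<noteq> 1 \<or> p = [] \<or> last p = DL")
  case True then show ?thesis by (simp add: op_times_def Hrec_replace Let_def)
next
  case False
  then have m: "weight_at T p = 1" and pne: "p \<noteq> []" and lp: "last p \<noteq> DL" by auto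
  define k where "k = (GREATEST k. k < length p \<and> anc_ok T (take k p))"
  have ex: "0 < length p \<and> anc_ok T (take 0 p)" using pne by (simp add: anc_ok_def)
  have kp: "k < length p \<and> anc_ok T (take k p)"
    unfolding k_def by (rule GreatestI_nat[where P="\<lambda>k. k < length p \<and> anc_ok T (take k p)" and k=0 and b="length p", OF ex]) auto
  have kmax: "\<not> anc_ok T (take j p)" if "k < j" "j < length p" for j
  proof
    assume "anc_ok T (take j p)"
    then have "j \<le> k" unfolding k_def using that(2)
      by (intro Greatest_le_nat[where b="length p"]) auto
    then show False using that by simp
  qed
  define b where "b = take k p"
  define d where "d = p ! k"
  define r where "r = drop (Suc k) p"
  have pdec: "p = b @ d # r" unfolding b_def d_def r_def using kp
    by (simp add: Cons_nth_drop_Suc)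
  have lb: "length b = k" using kp b_def by simp
  have opt: "op_times T p = replace_at b (subtree T (b @ [DL])) T"
    using False unfolding op_times_def Let_def k_def[symmetric] b_def by simp
  have dr: "d # r \<in> set (leaf_paths (subtree T b))" using p pdec leaf_path_split by simp
  obtain a1 b1 c1 where U: "subtree T b = Node a1 b1 c1"
      and r: "r \<in> set (leaf_paths (subtree (subtree T b) [d]))"
    using leaf_path_Cons[OF dr] by blast
  have dDL: "d \<noteq> DL"
  proof (cases r)
    case Nil then show ?thesis using lp pdec by simp
  next
    case (Cons e r')
    have "\<not> anc_ok T (take (Suc k) p)" using kmax[of "Suc k"] pdec lb Cons by simp
    moreover have "take (Suc k) p = b @ [d]" using pdec lb by simp
    ultimately show ?thesis by (simp add: anc_ok_def)
  qed
  have cond: "\<forall>q e q'. r = q @ e # q' \<longrightarrow> e \<noteq> DL \<and>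
       total_weight (subtree (subtree (subtree T b) [d]) (q @ [DL])) = 0"
  proof (intro allI impI)
    fix q e q' assume rq: "r = q @ e # q'"
    have j1: "\<not> anc_ok T (take (Suc k + length q) p)"
      using kmax[of "Suc k + length q"] pdec lb rq by simp
    have tk: "take (Suc k + length q) p = b @ d # q" using pdec lb rq by simp
    have w: "total_weight (subtree (subtree (subtree T b) [d]) (q @ [DL])) = 0"
      using j1 unfolding tk anc_ok_def by (simp add: subtree_append[symmetric])
    have "e \<noteq> DL"
    proof (cases q')
      case Nil then show ?thesis using lp pdec rq by simp
    next
      case (Cons e' q'')
      have "\<not> anc_ok T (take (Suc (Suc k + length q)) p)"
        using kmax[of "Suc (Suc k + length q)"] pdec lb rq Cons by simp
      moreover have "take (Suc (Suc k + length q)) p = b @ d # q @ [e]" using pdec lb rq by simp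
      ultimately show ?thesis by (simp add: anc_ok_def)
    qed
    with w show "e \<noteq> DL \<and> total_weight (subtree (subtree (subtree T b) [d]) (q @ [DL])) = 0"
      by simp
  qed
  have one: "Hrep (subtree (subtree T b) [d]) r 1 y = 1" by (rule Hrep_one[OF r cond])
  have "Hrep T p 1 y = Hrep T b (Hrep (subtree T b) (d # r) 1 y) y"
    using pdec Hrep_append by simp
  also have "Hrep (subtree T b) (d # r) 1 y = Hrec a1 y"
    using U one dDL by (cases d) (auto simp: comb_def)
  finally show ?thesis using m U by (simp add: opt Hrec_replace subtree_append)
qed

lemma H_op_circ:
  assumes p: "p \<in> set (leaf_paths T)"
  shows "H (op_circ T p) y = Hrep T p 0 y"
proof -
  define k where "k = (GREATEST k. k \<le> length p \<and> (k = 0 \<or> last (take k p) \<noteq> DL))"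
  have kp: "k \<le> length p \<and> (k = 0 \<or> last (take k p) \<noteq> DL)"
    unfolding k_def by (rule GreatestI_nat[of _ 0]) auto
  have kmax: "last (take j p) = DL" if "k < j" "j \<le> length p" for j
  proof (rule ccontr)
    assume "last (take j p) \<noteq> DL"
    then have "j \<le> k" unfolding k_def using that(2) by (intro Greatest_le_nat) auto
    then show False using that by simp
  qed
  have restDL: "\<forall>e\<in>set (drop k p). e = DL"
  proof
    fix e assume "e \<in> set (drop k p)"
    then obtain i where i: "i < length (drop k p)" "drop k p ! i = e" by (auto simp: in_set_conv_nth)
    have "last (take (Suc (k + i)) p) = DL" using kmax[of "Suc (k+i)"] i by simp
    moreover have "last (take (Suc (k + i)) p) = p ! (k + i)" using i
      by (simp add: take_Suc_conv_app_nth)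
    ultimately show "e = DL" using i kp by simp
  qed
  show ?thesis
  proof (cases "k = 0")
    case True
    then have "op_circ T p = None" unfolding op_circ_def Let_def k_def[symmetric] by simp
    moreover have "Hrep T p 0 y = 0" using Hrep_all_DL_zero[OF _ p] restDL True by simp
    ultimately show ?thesis by simp
  next
    case False
    define par where "par = take (k - 1) p"
    define d where "d = p ! (k - 1)"
    define r where "r = drop k p"
    have k1: "k - 1 < length p" "Suc (k - 1) = k" using kp False by auto
    have pdec: "p = par @ d # r" unfolding par_def d_def r_def
      using id_take_nth_drop[OF k1(1)] k1(2) by simp
    have tk: "take k p = par @ [d]" unfolding par_def d_def
      using take_Suc_conv_app_nth[OF k1(1)] k1(2) by simp
    have dDL: "d \<noteq> DL" using kp False tk by simp
    have dr: "d # r \<in> set (leaf_paths (subtree T par))" using p pdec leaf_path_split by simp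
    obtain a1 b1 c1 where U: "subtree T par = Node a1 b1 c1"
        and r: "r \<in> set (leaf_paths (subtree (subtree T par) [d]))"
      using leaf_path_Cons[OF dr] by blast
    have z: "Hrep (subtree (subtree T par) [d]) r 0 y = 0"
      using Hrep_all_DL_zero[OF _ r] restDL r_def by simp
    have oc: "op_circ T p = Some (replace_at par
        (graft (subtree T (par @ [DL])) (subtree T (par @ [if d = DM then DR else DM]))) T)"
      using False unfolding op_circ_def Let_def k_def[symmetric] par_def d_def by simp
    have "Hrep T p 0 y = Hrep T par (Hrep (subtree T par) (d # r) 0 y) y"
      using pdec Hrep_append by simp
    also have "Hrep (subtree T par) (d # r) 0 y =
        Hrec (graft (subtree T (par @ [DL])) (subtree T (par @ [if d = DM then DR else DM]))) y"
      using U z dDL by (cases d) (auto simp: comb_def Hrec_graft subtree_append)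
    finally show ?thesis using oc by (simp add: Hrec_replace H_tree_Hrec)
  qed
qed


lemma sum_list_concat': "sum_list (concat xss) = sum_list (map sum_list (xss :: real list list))"
  by (induction xss) auto

lemma trans_sum:
  "sum_list (map (\<lambda>(a, Y). a * \<phi> Y) (transitions s \<gamma> u \<nu>0 \<nu>1 (Some T))) =
   sum_list (map (\<lambda>p. real (weight_at T p) * (s * \<phi> (Some (op_bin T p)) + \<gamma> * \<phi> (Some (op_ter T p))
      + u * \<nu>1 * \<phi> (Some (op_times T p)) + u * \<nu>0 * \<phi> (op_circ T p))) (leaf_paths T))"
  by (simp add: map_concat sum_list_concat' o_def Let_def algebra_simps)

lemma trans_rate:
  "total_rate s \<gamma> u \<nu>0 \<nu>1 (Some T) =
   sum_list (map (\<lambda>p. real (weight_at T p) * (s + \<gamma> + u * \<nu>1 + u * \<nu>0)) (leaf_paths T))"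
  by (simp add: total_rate_def map_concat sum_list_concat' o_def Let_def algebra_simps)

lemma map_weight_at: "map (weight_at T) (leaf_paths T) = leaf_weights T"
  by (induction T) (auto simp: o_def)

lemma sum_weights: "sum_list (map (\<lambda>p. real (weight_at T p)) (leaf_paths T)) = real (total_weight T)"
proof -
  have "sum_list (map (\<lambda>p. real (weight_at T p)) (leaf_paths T)) = sum_list (map real (leaf_weights T))"
    by (simp add: map_weight_at[symmetric] o_def)
  also have "\<dots> = real (total_weight T)" by (induction T) auto
  finally show ?thesis .
qed

lemma total_rate_Some:
  "total_rate s \<gamma> u \<nu>0 \<nu>1 (Some T) = (s + \<gamma> + u * \<nu>1 + u * \<nu>0) * real (total_weight T)"
  by (simp add: trans_rate sum_list_mult_const sum_weights)

lemma total_rate_None: "total_rate s \<gamma> u \<nu>0 \<nu>1 None = 0"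
  by (simp add: total_rate_def)

definition Fode :: "real \<Rightarrow> real \<Rightarrow> real \<Rightarrow> real \<Rightarrow> real \<Rightarrow> real \<Rightarrow> real" where
  "Fode s \<gamma> u \<nu>0 \<nu>1 y = - y * (1 - y) * (s + \<gamma> * (1 - y)) + u * \<nu>1 * (1 - y) - u * \<nu>0 * y"

definition Hd :: "wtree \<Rightarrow> real \<Rightarrow> real" where
  "Hd T y = sum_list (map (\<lambda>p. (Hrep T p 1 y - Hrep T p 0 y) *
       (real (weight_at T p) * y ^ (weight_at T p - 1))) (leaf_paths T))"

lemma leaf_identity:
  "real m * (s * (A + y ^ (m + 1) * B) + \<gamma> * (A + y ^ m * comb y y * B) + u * \<nu>1 * (A + y ^ (m - 1) * B)
      + u * \<nu>0 * A) - real m * (s + \<gamma> + u * \<nu>1 + u * \<nu>0) * (A + y ^ m * B)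
   = B * (real m * y ^ (m - 1)) * Fode s \<gamma> u \<nu>0 \<nu>1 y"
proof (cases m)
  case 0 then show ?thesis by simp
next
  case (Suc k)
  have e1: "y ^ (m + 1) = y ^ k * y * y" and e2: "y ^ m = y ^ k * y" and e3: "y ^ (m - 1) = y ^ k"
    using Suc by auto
  show ?thesis unfolding e1 e2 e3 Fode_def comb_def by (simp add: algebra_simps)
qed

lemma generator_identity:
  "sum_list (map (\<lambda>(a, Y). a * H Y y) (transitions s \<gamma> u \<nu>0 \<nu>1 (Some T)))
     - total_rate s \<gamma> u \<nu>0 \<nu>1 (Some T) * Hrec T y = Hd T y * Fode s \<gamma> u \<nu>0 \<nu>1 y"
proof -
  define L where "L p = real (weight_at T p) * (s * H (Some (op_bin T p)) y + \<gamma> * H (Some (op_ter T p)) y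
      + u * \<nu>1 * H (Some (op_times T p)) y + u * \<nu>0 * H (op_circ T p) y)" for p
  define R where "R p = real (weight_at T p) * (s + \<gamma> + u * \<nu>1 + u * \<nu>0) * Hrec T y" for p
  define D where "D p = (Hrep T p 1 y - Hrep T p 0 y) * (real (weight_at T p) * y ^ (weight_at T p - 1))
         * Fode s \<gamma> u \<nu>0 \<nu>1 y" for p
  have leaf: "L p - R p = D p" if p: "p \<in> set (leaf_paths T)" for p
  proof -
    let ?m = "weight_at T p" and ?A = "Hrep T p 0 y" and ?B = "Hrep T p 1 y - Hrep T p 0 y"
    have aff: "\<And>z. Hrep T p z y = ?A + z * ?B" by (rule Hrep_affine)
    have e0: "Hrec T y = ?A + y ^ ?m * ?B" using Hrep_leaf[OF p, of y] aff[of "y ^ ?m"] by simp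
    have e1: "H (Some (op_bin T p)) y = ?A + y ^ (?m + 1) * ?B"
      by (simp only: H.simps H_tree_Hrec Hrec_op_bin aff[of "y ^ (?m + 1)"])
    have e2: "H (Some (op_ter T p)) y = ?A + y ^ ?m * comb y y * ?B"
      by (simp only: H.simps H_tree_Hrec Hrec_op_ter aff[of "y ^ ?m * comb y y"] mult.assoc)
    have e3: "H (Some (op_times T p)) y = ?A + y ^ (?m - 1) * ?B"
      by (simp only: H.simps H_tree_Hrec Hrec_op_times[OF p] aff[of "y ^ (?m - 1)"])
    have e4: "H (op_circ T p) y = ?A"
      by (simp only: H_op_circ[OF p])
    show ?thesis unfolding L_def R_def D_def e0 e1 e2 e3 e4 by (rule leaf_identity)
  qed
  have 1: "sum_list (map (\<lambda>(a, Y). a * H Y y) (transitions s \<gamma> u \<nu>0 \<nu>1 (Some T)))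
      = sum_list (map L (leaf_paths T))"
    unfolding L_def by (rule trans_sum)
  have 2: "total_rate s \<gamma> u \<nu>0 \<nu>1 (Some T) * Hrec T y = sum_list (map R (leaf_paths T))"
    unfolding R_def trans_rate by (rule sum_list_mult_const[symmetric])
  have 3: "sum_list (map L (leaf_paths T)) - sum_list (map R (leaf_paths T))
      = sum_list (map (\<lambda>p. L p - R p) (leaf_paths T))"
    by (rule sum_list_subtractf[symmetric])
  also have "\<dots> = sum_list (map D (leaf_paths T))"
    by (rule arg_cong[where f=sum_list], rule map_cong[OF refl], rule leaf)
  also have "\<dots> = Hd T y * Fode s \<gamma> u \<nu>0 \<nu>1 y"
    unfolding D_def Hd_def by (rule sum_list_mult_const)
  finally show ?thesis using 1 2 by simp
qed

lemma Hd_Node: "Hd (Node a b c) y = Hd a y * comb (Hrec b y) (Hrec c y)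
    + Hrec a y * (1 - Hrec c y) * Hd b y + Hrec a y * (1 - Hrec b y) * Hd c y"
proof -
  have 1: "\<And>p. (Hrep a p 1 y * comb (Hrec b y) (Hrec c y) - Hrep a p 0 y * comb (Hrec b y) (Hrec c y))
      * (real (weight_at a p) * y ^ (weight_at a p - 1)) =
      ((Hrep a p 1 y - Hrep a p 0 y) * (real (weight_at a p) * y ^ (weight_at a p - 1)))
         * comb (Hrec b y) (Hrec c y)"
    by (simp add: algebra_simps)
  have 2: "\<And>p. (Hrec a y * comb (Hrep b p 1 y) (Hrec c y) - Hrec a y * comb (Hrep b p 0 y) (Hrec c y))
      * (real (weight_at b p) * y ^ (weight_at b p - 1)) =
      Hrec a y * (1 - Hrec c y) * ((Hrep b p 1 y - Hrep b p 0 y) * (real (weight_at b p) * y ^ (weight_at b p - 1)))"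
    by (simp add: comb_def algebra_simps)
  have 3: "\<And>p. (Hrec a y * comb (Hrec b y) (Hrep c p 1 y) - Hrec a y * comb (Hrec b y) (Hrep c p 0 y))
      * (real (weight_at c p) * y ^ (weight_at c p - 1)) =
      Hrec a y * (1 - Hrec b y) * ((Hrep c p 1 y - Hrep c p 0 y) * (real (weight_at c p) * y ^ (weight_at c p - 1)))"
    by (simp add: comb_def algebra_simps)
  show ?thesis unfolding Hd_def
    apply (simp only: leaf_paths.simps map_append sum_list_append map_map o_def Hrep.simps weight_at_simps)
    apply (simp only: 1 2 3 sum_list_mult_const sum_list_const_mult)
    done
qed

lemma Hrec_deriv: "(Hrec T has_real_derivative Hd T y) (at y)"
proof (induction T)
  case (Leaf n)
  show ?case unfolding Hrec.simps Hd_def using DERIV_pow[of n y] by simp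
next
  case (Node a b c)
  have db: "((\<lambda>y. Hrec b y + Hrec c y - Hrec b y * Hrec c y) has_real_derivative
       Hd b y + Hd c y - (Hd b y * Hrec c y + Hd c y * Hrec b y)) (at y)"
    by (intro DERIV_diff DERIV_add DERIV_mult Node.IH)
  have "((\<lambda>y. Hrec a y * comb (Hrec b y) (Hrec c y)) has_real_derivative
     Hd a y * comb (Hrec b y) (Hrec c y) + (Hd b y + Hd c y - (Hd b y * Hrec c y + Hd c y * Hrec b y)) * Hrec a y) (at y)"
    unfolding comb_def by (rule DERIV_mult[OF Node.IH(1) db])
  then show ?case by (simp add: Hd_Node comb_def algebra_simps)
qed


lemma tw_replace:
  "q @ r \<in> set (leaf_paths T) \<Longrightarrow>
   total_weight (replace_at q S T) + total_weight (subtree T q) = total_weight T + total_weight S"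
proof (induction T arbitrary: q)
  case (Leaf n) then show ?case by (cases q) auto
next
  case (Node a b c) then show ?case
    by (cases q; case_tac "hd q") (fastforce simp: neq_Nil_conv)+
qed

lemma tw_add_leftmost: "total_weight (add_leftmost n W) = n + total_weight W"
  by (induction W) auto

lemma tw_graft: "total_weight (graft V W) = total_weight V + total_weight W"
  by (induction V) (auto simp: tw_add_leftmost)

definition Vf :: "state \<Rightarrow> real" where
  "Vf X = (case X of None \<Rightarrow> 1 | Some T \<Rightarrow> 1 + real (total_weight T))"

lemma Vf_ge1: "Vf X \<ge> 1"
  by (cases X) (auto simp: Vf_def)

lemma tw_leaf_replace:
  assumes p: "p \<in> set (leaf_paths T)"
  shows "total_weight (replace_at p S T) + weight_at T p = total_weight T + total_weight S"
  using tw_replace[of p "[]" T S] p subtree_leaf[OF p] by simp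

lemma Vf_bin: "p \<in> set (leaf_paths T) \<Longrightarrow> Vf (Some (op_bin T p)) = Vf (Some T) + 1"
  using tw_leaf_replace[of p T "Leaf (weight_at T p + 1)"] by (simp add: Vf_def op_bin_def)

lemma Vf_ter: "p \<in> set (leaf_paths T) \<Longrightarrow> Vf (Some (op_ter T p)) = Vf (Some T) + 2"
  using tw_leaf_replace[of p T "Node (Leaf (weight_at T p)) (Leaf 1) (Leaf 1)"]
  by (simp add: Vf_def op_ter_def)

lemma Vf_times:
  assumes p: "p \<in> set (leaf_paths T)"
  shows "Vf (Some (op_times T p)) \<le> Vf (Some T)"
proof (cases "weight_at T p \<noteq> 1 \<or> p = [] \<or> last p = DL")
  case True then show ?thesis
    using tw_leaf_replace[OF p, of "Leaf (weight_at T p - 1)"]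
    by (simp add: op_times_def Let_def Vf_def)
next
  case False
  define k where "k = (GREATEST k. k < length p \<and> anc_ok T (take k p))"
  have ex: "0 < length p \<and> anc_ok T (take 0 p)" using False by (simp add: anc_ok_def)
  have kp: "k < length p \<and> anc_ok T (take k p)"
    unfolding k_def
    by (rule GreatestI_nat[where P="\<lambda>k. k < length p \<and> anc_ok T (take k p)" and k=0
          and b="length p", OF ex]) auto
  define b where "b = take k p"
  have opt: "op_times T p = replace_at b (subtree T (b @ [DL])) T"
    using False unfolding op_times_def Let_def k_def[symmetric] b_def by simp
  have pd: "b @ (p ! k # drop (Suc k) p) \<in> set (leaf_paths T)"
    using p kp unfolding b_def by (simp add: Cons_nth_drop_Suc)
  obtain a1 b1 c1 where U: "subtree T b = Node a1 b1 c1"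
    using leaf_path_Cons[OF leaf_path_split[OF pd]] by blast
  have "total_weight (replace_at b (subtree T (b @ [DL])) T) + total_weight (subtree T b)
        = total_weight T + total_weight (subtree T (b @ [DL]))"
    by (rule tw_replace[OF pd])
  then show ?thesis using U by (simp add: opt Vf_def subtree_append)
qed

lemma Vf_circ:
  assumes p: "p \<in> set (leaf_paths T)"
  shows "Vf (op_circ T p) \<le> Vf (Some T)"
proof -
  define k where "k = (GREATEST k. k \<le> length p \<and> (k = 0 \<or> last (take k p) \<noteq> DL))"
  have kp: "k \<le> length p \<and> (k = 0 \<or> last (take k p) \<noteq> DL)"
    unfolding k_def by (rule GreatestI_nat[of _ 0]) auto
  show ?thesis
  proof (cases "k = 0")
    case True
    then have "op_circ T p = None" unfolding op_circ_def Let_def k_def[symmetric] by simp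
    then show ?thesis using Vf_ge1[of "Some T"] by (simp add: Vf_def)
  next
    case False
    define par where "par = take (k - 1) p"
    define d where "d = p ! (k - 1)"
    have k1: "k - 1 < length p" "Suc (k - 1) = k" using kp False by auto
    have pd: "par @ (d # drop k p) \<in> set (leaf_paths T)" unfolding par_def d_def
      using id_take_nth_drop[OF k1(1)] k1(2) p by simp
    obtain a1 b1 c1 where U: "subtree T par = Node a1 b1 c1"
      using leaf_path_Cons[OF leaf_path_split[OF pd]] by blast
    have oc: "op_circ T p = Some (replace_at par
        (graft (subtree T (par @ [DL])) (subtree T (par @ [if d = DM then DR else DM]))) T)"
      using False unfolding op_circ_def Let_def k_def[symmetric] par_def d_def by simp
    let ?S = "graft (subtree T (par @ [DL])) (subtree T (par @ [if d = DM then DR else DM]))"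
    have "total_weight (replace_at par ?S T) + total_weight (subtree T par)
        = total_weight T + total_weight ?S"
      by (rule tw_replace[OF pd])
    moreover have "total_weight ?S \<le> total_weight (subtree T par)"
      using U by (simp add: tw_graft subtree_append)
    ultimately show ?thesis using oc by (simp add: Vf_def)
  qed
qed


lemma integral_reflect_t: "integral {0..t} (\<lambda>r. h (t - r)) = integral {0..t::real} (h :: real \<Rightarrow> real)"
proof -
  have "integral {0..t} (\<lambda>r. h (t - r)) = integral {-t - (-t)..0 - (-t)} (\<lambda>x. (\<lambda>x. h (- x)) (x + (-t)))"
    by simp
  also have "\<dots> = integral {-t..0} (\<lambda>x. h (- x))"
    by (rule integral_shift_real_ivl)
  also have "\<dots> = integral {0..t} h"
    using Henstock_Kurzweil_Integration.integral_reflect_real[of t 0 h] by simp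
  finally show ?thesis .
qed

lemma continuous_on_sum_list_map:
  "(\<And>x. x \<in> set xs \<Longrightarrow> continuous_on S (\<lambda>r. g x r)) \<Longrightarrow>
   continuous_on S (\<lambda>r. sum_list (map (\<lambda>x. g x r) xs) :: real)"
  by (induction xs) (auto intro!: continuous_intros)

locale asg =
  fixes s \<gamma> u \<nu>0 \<nu>1 :: real
  assumes rates_pos: "s \<ge> 0" "\<gamma> \<ge> 0" "u \<ge> 0" "\<nu>0 \<ge> 0" "\<nu>1 \<ge> 0"
begin

definition "tr X = transitions s \<gamma> u \<nu>0 \<nu>1 X"
definition "qr X = total_rate s \<gamma> u \<nu>0 \<nu>1 X"
definition Sf :: "(real \<Rightarrow> state \<Rightarrow> real) \<Rightarrow> real \<Rightarrow> state \<Rightarrow> real" where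
  "Sf \<phi> r X = sum_list (map (\<lambda>(a, Y). a * \<phi> r Y) (tr X))"
definition Kc :: "(real \<Rightarrow> state \<Rightarrow> real) \<Rightarrow> real \<Rightarrow> state \<Rightarrow> real" where
  "Kc \<phi> t X = exp (- qr X * t) * integral {0..t} (\<lambda>r. exp (qr X * r) * Sf \<phi> r X)"
definition cont :: "(real \<Rightarrow> state \<Rightarrow> real) \<Rightarrow> bool" where
  "cont \<phi> \<longleftrightarrow> (\<forall>Y T. continuous_on {0..T} (\<lambda>t. \<phi> t Y))"

lemma rate_nonneg: "(a, Y) \<in> set (tr X) \<Longrightarrow> a \<ge> 0"
  using rates_pos by (cases X) (auto simp: tr_def Let_def)

lemma Sf_cont: "cont \<phi> \<Longrightarrow> continuous_on {0..T} (\<lambda>r. Sf \<phi> r X)"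
  unfolding Sf_def cont_def
  by (rule continuous_on_sum_list_map) (auto simp: split_def intro!: continuous_intros)

lemma integrand_cont: "cont \<phi> \<Longrightarrow> continuous_on {0..T} (\<lambda>r. exp (qr X * r) * Sf \<phi> r X)"
  by (intro continuous_intros Sf_cont)

lemma integrand_int: "cont \<phi> \<Longrightarrow> (\<lambda>r. exp (qr X * r) * Sf \<phi> r X) integrable_on {0..T}"
  by (rule integrable_continuous_interval[OF integrand_cont])

lemma jump_part_Suc:
  assumes "cont (\<lambda>t Y. jump_part s \<gamma> u \<nu>0 \<nu>1 n g t Y)" "t \<ge> 0"
  shows "jump_part s \<gamma> u \<nu>0 \<nu>1 (Suc n) g t X = Kc (\<lambda>t Y. jump_part s \<gamma> u \<nu>0 \<nu>1 n g t Y) t X"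
proof -
  let ?\<phi> = "\<lambda>t Y. jump_part s \<gamma> u \<nu>0 \<nu>1 n g t Y"
  let ?h = "\<lambda>r. exp (- qr X * (t - r)) * Sf ?\<phi> r X"
  have "jump_part s \<gamma> u \<nu>0 \<nu>1 (Suc n) g t X = integral {0..t} (\<lambda>r. ?h (t - r))"
    by (simp add: Sf_def tr_def qr_def)
  also have "\<dots> = integral {0..t} ?h" by (rule integral_reflect_t)
  also have "\<dots> = integral {0..t} (\<lambda>r. exp (- qr X * t) * (exp (qr X * r) * Sf ?\<phi> r X))"
    by (rule integral_cong) (simp add: algebra_simps flip: exp_add)
  also have "\<dots> = Kc ?\<phi> t X" by (simp add: Kc_def)
  finally show ?thesis .
qed

lemma Kc_cont: "cont \<phi> \<Longrightarrow> cont (Kc \<phi>)"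
  unfolding cont_def[of "Kc \<phi>"] Kc_def
  by (intro allI continuous_intros indefinite_integral_continuous_1 integrand_int)

lemma Kc_cong: "(\<And>r Y. r \<in> {0..t} \<Longrightarrow> \<phi>1 r Y = \<phi>2 r Y) \<Longrightarrow> Kc \<phi>1 t X = Kc \<phi>2 t X"
  unfolding Kc_def Sf_def by (intro arg_cong2[where f="(*)"] refl integral_cong) auto

lemma Kc_mono:
  assumes "cont \<phi>1" "cont \<phi>2" "\<And>r Y. r \<in> {0..t} \<Longrightarrow> \<phi>1 r Y \<le> \<phi>2 r Y"
  shows "Kc \<phi>1 t X \<le> Kc \<phi>2 t X"
  unfolding Kc_def
proof (rule mult_left_mono[OF _ exp_ge_zero], rule integral_le[OF integrand_int integrand_int])
  fix r assume r: "r \<in> {0..t}"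
  have "Sf \<phi>1 r X \<le> Sf \<phi>2 r X" unfolding Sf_def
    by (rule sum_list_mono) (auto intro!: mult_left_mono assms(3)[OF r] dest: rate_nonneg)
  then show "exp (qr X * r) * Sf \<phi>1 r X \<le> exp (qr X * r) * Sf \<phi>2 r X" by simp
qed (use assms in auto)

lemma Kc_add:
  assumes "cont \<phi>1" "cont \<phi>2"
  shows "Kc (\<lambda>t Y. \<phi>1 t Y + \<phi>2 t Y) t X = Kc \<phi>1 t X + Kc \<phi>2 t X"
proof -
  have "\<And>r. Sf (\<lambda>t Y. \<phi>1 t Y + \<phi>2 t Y) r X = Sf \<phi>1 r X + Sf \<phi>2 r X"
    unfolding Sf_def by (simp add: split_def distrib_left sum_list_addf)
  then show ?thesis unfolding Kc_def
    by (simp add: distrib_left integral_add[OF integrand_int[OF assms(1)] integrand_int[OF assms(2)]])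
qed

lemma Kc_cmult: "Kc (\<lambda>t Y. c * \<phi> t Y) t X = c * Kc \<phi> t X"
proof -
  have "\<And>r. Sf (\<lambda>t Y. c * \<phi> t Y) r X = c * Sf \<phi> r X"
    unfolding Sf_def by (simp add: split_def sum_list_const_mult[symmetric] algebra_simps)
  then show ?thesis unfolding Kc_def by (simp add: algebra_simps)
qed

lemma Kc_zero: "Kc (\<lambda>t Y. 0) t X = 0"
  using Kc_cmult[of 0 "\<lambda>t Y. 0" t X] by simp

lemma cont_sum: "(\<And>n. n < (N::nat) \<Longrightarrow> cont (\<phi> n)) \<Longrightarrow> cont (\<lambda>t Y. \<Sum>n<N. \<phi> n t Y)"
  unfolding cont_def by (auto intro!: continuous_on_sum)

lemma Kc_sum:
  "(\<And>n. n < (N::nat) \<Longrightarrow> cont (\<phi> n)) \<Longrightarrow> Kc (\<lambda>t Y. \<Sum>n<N. \<phi> n t Y) t X = (\<Sum>n<N. Kc (\<phi> n) t X)"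
proof (induction N)
  case 0 then show ?case by (simp add: Kc_zero)
next
  case (Suc N)
  have "Kc (\<lambda>t Y. \<Sum>n<Suc N. \<phi> n t Y) t X = Kc (\<lambda>t Y. (\<Sum>n<N. \<phi> n t Y) + \<phi> N t Y) t X"
    by simp
  also have "\<dots> = Kc (\<lambda>t Y. \<Sum>n<N. \<phi> n t Y) t X + Kc (\<phi> N) t X"
    using Suc.prems by (intro Kc_add cont_sum) auto
  finally show ?case using Suc by simp
qed

lemma VC:
  assumes der: "\<And>Y t. t \<ge> 0 \<Longrightarrow>
     ((\<lambda>t. \<phi> t Y) has_real_derivative (Sf \<phi> t Y - qr Y * \<phi> t Y)) (at t within {0..})"
    and t: "t \<ge> 0"
  shows "\<phi> t X = exp (- qr X * t) * \<phi> 0 X + Kc \<phi> t X" and "cont \<phi>"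
proof -
  show c: "cont \<phi>" unfolding cont_def
  proof (intro allI)
    fix Y T
    show "continuous_on {0..T} (\<lambda>t. \<phi> t Y)"
      by (rule DERIV_continuous_on[of _ _ "\<lambda>t. Sf \<phi> t Y - qr Y * \<phi> t Y"])
         (auto intro: has_field_derivative_subset[OF der])
  qed
  let ?G = "\<lambda>r. exp (qr X * r) * \<phi> r X"
  have "((\<lambda>r. exp (qr X * r) * Sf \<phi> r X) has_integral (?G t - ?G 0)) {0..t}"
  proof (rule fundamental_theorem_of_calculus[OF t])
    fix r assume r: "r \<in> {0..t}"
    have dphi: "((\<lambda>x. \<phi> x X) has_real_derivative (Sf \<phi> r X - qr X * \<phi> r X)) (at r within {0..t})"
      by (rule has_field_derivative_subset[OF der]) (use r in auto)
    have dexp: "((\<lambda>x. exp (qr X * x)) has_real_derivative (exp (qr X * r) * qr X)) (at r within {0..t})"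
      by (auto intro!: derivative_eq_intros)
    have "(?G has_real_derivative (exp (qr X * r) * (Sf \<phi> r X - qr X * \<phi> r X) + exp (qr X * r) * qr X * \<phi> r X))
         (at r within {0..t})"
      by (rule DERIV_mult'[OF dexp dphi])
    then have "(?G has_real_derivative (exp (qr X * r) * Sf \<phi> r X)) (at r within {0..t})"
      by (simp add: algebra_simps)
    then show "(?G has_vector_derivative (exp (qr X * r) * Sf \<phi> r X)) (at r within {0..t})"
      by (simp add: has_real_derivative_iff_has_vector_derivative[symmetric] algebra_simps)
  qed
  then have "integral {0..t} (\<lambda>r. exp (qr X * r) * Sf \<phi> r X) = ?G t - ?G 0"
    by (rule integral_unique)
  then have "Kc \<phi> t X = exp (- qr X * t) * (exp (qr X * t) * \<phi> t X - \<phi> 0 X)"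
    by (simp add: Kc_def)
  also have "\<dots> = \<phi> t X - exp (- qr X * t) * \<phi> 0 X"
    by (simp add: algebra_simps flip: exp_add)
  finally show "\<phi> t X = exp (- qr X * t) * \<phi> 0 X + Kc \<phi> t X" by simp
qed

end


lemma alg_aux:
  fixes a c E F q V :: real
  assumes "c \<noteq> 0"
  shows "(E * q * (a / c * (F - 1)) + a / c * (F * c) * E) * V = E * (a * V + a / c * (F - 1) * (q + c) * V)"
  using assms by (simp add: field_simps)

context asg
begin

abbreviation "cc \<equiv> s + 2 * \<gamma>"
abbreviation "cq \<equiv> s + \<gamma> + u * \<nu>1 + u * \<nu>0"

lemma cq_nonneg: "cq \<ge> 0" using rates_pos by simp

lemma qr_Some: "qr (Some T) = cq * real (total_weight T)"
  by (simp add: qr_def total_rate_Some)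

lemma qr_None: "qr None = 0"
  by (simp add: qr_def total_rate_None)

lemma qr_nonneg: "qr X \<ge> 0"
  using cq_nonneg by (cases X) (auto simp: qr_Some qr_None)

lemma qr_le: "qr X \<le> cq * Vf X"
  using cq_nonneg by (cases X) (auto simp: qr_Some qr_None Vf_def algebra_simps)

lemma tr_fst: "sum_list (map fst (tr X)) = qr X"
  by (simp add: qr_def total_rate_def tr_def)

lemma Sf_one: "Sf (\<lambda>t Y. 1) r X = qr X"
proof -
  have "Sf (\<lambda>t Y. 1) r X = sum_list (map fst (tr X))" unfolding Sf_def by (simp add: split_def)
  then show ?thesis by (simp add: qr_def total_rate_def tr_def)
qed

lemma Sf_Vf: "Sf (\<lambda>t Y. Vf Y) r X \<le> (qr X + cc) * Vf X"
proof (cases X)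
  case None then show ?thesis using rates_pos by (simp add: Sf_def tr_def Vf_def qr_None)
next
  case (Some T)
  let ?V = "Vf (Some T)"
  have "Sf (\<lambda>t Y. Vf Y) r X = sum_list (map (\<lambda>p. real (weight_at T p) * (s * Vf (Some (op_bin T p))
      + \<gamma> * Vf (Some (op_ter T p)) + u * \<nu>1 * Vf (Some (op_times T p)) + u * \<nu>0 * Vf (op_circ T p)))
      (leaf_paths T))"
    unfolding Sf_def tr_def Some by (rule trans_sum)
  also have "\<dots> \<le> sum_list (map (\<lambda>p. real (weight_at T p) * (cq * ?V + cc)) (leaf_paths T))"
  proof (rule sum_list_mono)
    fix p assume p: "p \<in> set (leaf_paths T)"
    have "s * Vf (Some (op_bin T p)) + \<gamma> * Vf (Some (op_ter T p)) + u * \<nu>1 * Vf (Some (op_times T p))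
        + u * \<nu>0 * Vf (op_circ T p) \<le> s * (?V + 1) + \<gamma> * (?V + 2) + u * \<nu>1 * ?V + u * \<nu>0 * ?V"
      using Vf_bin[OF p] Vf_ter[OF p] Vf_times[OF p] Vf_circ[OF p] rates_pos
      by (intro add_mono mult_left_mono) auto
    also have "\<dots> = cq * ?V + cc" by (simp add: algebra_simps)
    finally show "real (weight_at T p) * (s * Vf (Some (op_bin T p)) + \<gamma> * Vf (Some (op_ter T p))
        + u * \<nu>1 * Vf (Some (op_times T p)) + u * \<nu>0 * Vf (op_circ T p))
        \<le> real (weight_at T p) * (cq * ?V + cc)"
      by (rule mult_left_mono) simp
  qed
  also have "\<dots> = real (total_weight T) * (cq * ?V + cc)"
    by (simp add: sum_list_mult_const sum_weights)
  also have "\<dots> = qr X * ?V + cc * real (total_weight T)"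
    by (simp add: Some qr_Some algebra_simps)
  also have "\<dots> \<le> qr X * ?V + cc * ?V"
    using rates_pos by (intro add_left_mono mult_left_mono) (auto simp: Vf_def)
  finally show ?thesis by (simp add: Some algebra_simps)
qed

definition "beta t = cq / cc * (exp (cc * t) - 1)"
definition "Bf t Y = beta t * Vf Y"

lemma beta_nonneg: "s > 0 \<Longrightarrow> t \<ge> 0 \<Longrightarrow> beta t \<ge> 0"
  unfolding beta_def using cq_nonneg rates_pos by (intro mult_nonneg_nonneg divide_nonneg_pos) auto

lemma cont_Bf: "cont (\<lambda>t Y. 1 + Bf t Y)"
proof -
  have "\<forall>Y T. continuous_on {0..T} (\<lambda>t. 1 + k * (exp (cc * t) - 1) * Vf Y)" for k
    by (auto intro!: continuous_intros)
  then show ?thesis unfolding cont_def Bf_def beta_def by blast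
qed

lemma Kc_super:
  assumes s: "s > 0" and t: "t \<ge> 0"
  shows "Kc (\<lambda>t Y. 1 + Bf t Y) t X \<le> Bf t X"
proof -
  let ?q = "qr X" and ?V = "Vf X"
  have cpos: "cc > 0" using s rates_pos by simp
  have Sf_eq: "Sf (\<lambda>t Y. 1 + Bf t Y) r X = ?q + beta r * Sf (\<lambda>t Y. Vf Y) r X" for r
    unfolding Sf_def Bf_def
    by (simp add: split_def distrib_left sum_list_addf sum_list_const_mult[symmetric] algebra_simps
        tr_fst)
  let ?g = "\<lambda>r. exp (?q * r) * (cq * ?V + beta r * (?q + cc) * ?V)"
  have le: "exp (?q * r) * Sf (\<lambda>t Y. 1 + Bf t Y) r X \<le> ?g r" if r: "r \<in> {0..t}" for r
  proof -
    have "Sf (\<lambda>t Y. 1 + Bf t Y) r X \<le> cq * ?V + beta r * ((?q + cc) * ?V)"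
      unfolding Sf_eq using qr_le[of X] Sf_Vf[of r X] beta_nonneg[OF s, of r] r
      by (intro add_mono mult_left_mono) auto
    then have "exp (?q * r) * Sf (\<lambda>t Y. 1 + Bf t Y) r X \<le> exp (?q * r) * (cq * ?V + beta r * ((?q + cc) * ?V))"
      by (rule mult_left_mono) simp
    moreover have "exp (?q * r) * (cq * ?V + beta r * ((?q + cc) * ?V)) = ?g r" by (simp add: algebra_simps)
    ultimately show ?thesis by simp
  qed
  let ?G = "\<lambda>r. exp (?q * r) * beta r * ?V"
  have "(?g has_integral (?G t - ?G 0)) {0..t}"
  proof (rule fundamental_theorem_of_calculus[OF t])
    fix r assume r: "r \<in> {0..t}"
    have dE: "((\<lambda>r. exp (?q * r)) has_real_derivative exp (?q * r) * ?q) (at r within {0..t})"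
      by (auto intro!: derivative_eq_intros)
    have dB: "(beta has_real_derivative cq / cc * (exp (cc * r) * cc)) (at r within {0..t})"
      unfolding beta_def[abs_def] by (auto intro!: derivative_eq_intros)
    have "(?G has_real_derivative (exp (?q * r) * ?q * beta r + cq / cc * (exp (cc * r) * cc) * exp (?q * r)) * ?V)
        (at r within {0..t})"
      by (rule DERIV_cmult_right[OF DERIV_mult[OF dE dB]])
    moreover have "(exp (?q * r) * ?q * beta r + cq / cc * (exp (cc * r) * cc) * exp (?q * r)) * ?V = ?g r"
    proof -
      show ?thesis unfolding beta_def by (rule alg_aux) (use cpos in simp)
    qed
    ultimately have "(?G has_real_derivative ?g r) (at r within {0..t})" by simp
    then show "(?G has_vector_derivative ?g r) (at r within {0..t})"
      by (simp add: has_real_derivative_iff_has_vector_derivative[symmetric])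
  qed
  then have int_g: "integral {0..t} ?g = ?G t" and gi: "?g integrable_on {0..t}"
    by (auto simp: beta_def integral_unique has_integral_integrable)
  have "Kc (\<lambda>t Y. 1 + Bf t Y) t X \<le> exp (- ?q * t) * integral {0..t} ?g"
    unfolding Kc_def
    by (rule mult_left_mono[OF integral_le[OF integrand_int[OF cont_Bf] gi le]]) auto
  also have "\<dots> = Bf t X"
    unfolding int_g Bf_def by (simp add: algebra_simps flip: exp_add)
  finally show ?thesis .
qed

definition "Qn N = (Kc ^^ N) (\<lambda>t Y. 1)"

fun Zn :: "nat \<Rightarrow> real \<Rightarrow> state \<Rightarrow> real" where
  "Zn 0 = (\<lambda>t Y. 0)"
| "Zn (Suc N) = Kc (\<lambda>t Y. 1 + Zn N t Y)"

lemma cont_const: "cont (\<lambda>t Y. c)"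
  by (simp add: cont_def)

lemma cont_pow: "cont \<phi> \<Longrightarrow> cont ((Kc ^^ N) \<phi>)"
  by (induction N) (auto intro: Kc_cont)

lemma cont_Qn: "cont (Qn N)"
  unfolding Qn_def by (rule cont_pow[OF cont_const])

lemma cont_Zn: "cont (Zn N)"
proof (induction N)
  case 0 then show ?case by (simp add: cont_const)
next
  case (Suc N)
  have "cont (\<lambda>t Y. 1 + Zn N t Y)" using Suc unfolding cont_def by (auto intro!: continuous_intros)
  then show ?case by (simp add: Kc_cont)
qed

lemma Qn_Suc: "Qn (Suc N) = Kc (Qn N)"
  by (simp add: Qn_def)

lemma Kc_one: "t \<ge> 0 \<Longrightarrow> Kc (\<lambda>t Y. 1) t X = 1 - exp (- qr X * t)"
  using VC(1)[of "\<lambda>t Y. 1" t X] by (simp add: Sf_one)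

lemma Qn_nonneg: "t \<ge> 0 \<Longrightarrow> Qn N t X \<ge> 0"
proof (induction N arbitrary: t X)
  case 0 then show ?case by (simp add: Qn_def)
next
  case (Suc N)
  have "Kc (\<lambda>t Y. 0) t X \<le> Kc (Qn N) t X"
    using Suc by (intro Kc_mono cont_const cont_Qn) auto
  then show ?case by (simp add: Qn_Suc Kc_zero)
qed

lemma Qn_dec: "t \<ge> 0 \<Longrightarrow> Qn (Suc N) t X \<le> Qn N t X"
proof (induction N arbitrary: t X)
  case 0 then show ?case using Kc_one[OF 0] by (simp add: Qn_def)
next
  case (Suc N)
  have "Kc (Qn (Suc N)) t X \<le> Kc (Qn N) t X"
    by (rule Kc_mono[OF cont_Qn cont_Qn]) (use Suc.IH in auto)
  then show ?case by (simp only: Qn_Suc)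
qed

lemma Qn_le1: "t \<ge> 0 \<Longrightarrow> Qn N t X \<le> 1"
proof (induction N)
  case 0 then show ?case by (simp add: Qn_def)
next
  case (Suc N) then show ?case using Qn_dec[of t N X] by linarith
qed

lemma NQ_le_Z: "t \<ge> 0 \<Longrightarrow> real N * Qn N t X \<le> Zn N t X"
proof (induction N arbitrary: t X)
  case 0 then show ?case by simp
next
  case (Suc N)
  have "real (Suc N) * Qn (Suc N) t X = Kc (\<lambda>t Y. real (Suc N) * Qn N t Y) t X"
    by (simp add: Qn_Suc Kc_cmult)
  also have "\<dots> \<le> Kc (\<lambda>t Y. 1 + Zn N t Y) t X"
  proof (rule Kc_mono)
    show "cont (\<lambda>t Y. real (Suc N) * Qn N t Y)"
      using cont_Qn[of N] unfolding cont_def by (auto intro!: continuous_intros)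
    show "cont (\<lambda>t Y. 1 + Zn N t Y)"
      using cont_Zn[of N] unfolding cont_def by (auto intro!: continuous_intros)
    fix r Y assume r: "r \<in> {0..t}"
    have "real (Suc N) * Qn N r Y = Qn N r Y + real N * Qn N r Y" by (simp add: algebra_simps)
    also have "\<dots> \<le> 1 + Zn N r Y" using Qn_le1[of r N Y] Suc.IH[of r Y] r by auto
    finally show "real (Suc N) * Qn N r Y \<le> 1 + Zn N r Y" .
  qed
  finally show ?case by simp
qed

lemma Z_le_B: "s > 0 \<Longrightarrow> t \<ge> 0 \<Longrightarrow> Zn N t X \<le> Bf t X"
proof (induction N arbitrary: t X)
  case 0 then show ?case
    using beta_nonneg[of t] Vf_ge1[of X] by (simp add: Bf_def)
next
  case (Suc N)
  have "Zn (Suc N) t X \<le> Kc (\<lambda>t Y. 1 + Bf t Y) t X"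
    unfolding Zn.simps
  proof (rule Kc_mono[OF _ cont_Bf])
    show "cont (\<lambda>t Y. 1 + Zn N t Y)"
      using cont_Zn[of N] unfolding cont_def by (auto intro!: continuous_intros)
  qed (use Suc in auto)
  also have "\<dots> \<le> Bf t X" by (rule Kc_super) (use Suc in auto)
  finally show ?case .
qed

lemma Qn_tendsto: "s > 0 \<Longrightarrow> t \<ge> 0 \<Longrightarrow> (\<lambda>N. Qn N t X) \<longlonglongrightarrow> 0"
proof (rule tendsto_sandwich[of "\<lambda>N. 0" _ _ "\<lambda>N. Bf t X / real N"])
  assume s: "s > 0" and t: "t \<ge> 0"
  show "\<forall>\<^sub>F N in sequentially. 0 \<le> Qn N t X" using Qn_nonneg[OF t] by simp
  show "\<forall>\<^sub>F N in sequentially. Qn N t X \<le> Bf t X / real N"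
    unfolding eventually_sequentially
  proof (intro exI[of _ 1] allI impI)
    fix N :: nat assume "N \<ge> 1"
    then have "real N * Qn N t X \<le> Bf t X" using NQ_le_Z[OF t, of N X] Z_le_B[OF s t, of N X] by simp
    then show "Qn N t X \<le> Bf t X / real N" using \<open>N \<ge> 1\<close> by (simp add: field_simps)
  qed
  show "(\<lambda>N. 0) \<longlonglongrightarrow> 0" by simp
  show "(\<lambda>N. Bf t X / real N) \<longlonglongrightarrow> 0" by (rule lim_const_over_n)
qed

end


context asg
begin

lemma repr:
  assumes s: "s > 0"
    and der: "\<And>Y t. t \<ge> 0 \<Longrightarrow>
       ((\<lambda>t. \<phi> t Y) has_real_derivative (Sf \<phi> t Y - qr Y * \<phi> t Y)) (at t within {0..})"
    and bnd: "\<And>Y t. t \<ge> 0 \<Longrightarrow> 0 \<le> \<phi> t Y \<and> \<phi> t Y \<le> 1"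
    and t: "t \<ge> 0"
  shows "(\<lambda>n. jump_part s \<gamma> u \<nu>0 \<nu>1 n (\<lambda>Y. \<phi> 0 Y) t X) sums \<phi> t X"
proof -
  define jp where "jp n = (\<lambda>t Y. jump_part s \<gamma> u \<nu>0 \<nu>1 n (\<lambda>Y. \<phi> 0 Y) t Y)" for n
  have c\<phi>: "cont \<phi>" by (rule VC(2)[OF der order_refl])
  have cjp: "cont (jp n)" for n
  proof (induction n)
    case 0 show ?case unfolding cont_def jp_def by (auto intro!: continuous_intros)
  next
    case (Suc n)
    show ?case unfolding cont_def
    proof (intro allI)
      fix Y T
      have "continuous_on {0..T} (\<lambda>t. Kc (jp n) t Y)"
        using Kc_cont[OF Suc] unfolding cont_def by blast
      moreover have "\<And>t. t \<in> {0..T} \<Longrightarrow> Kc (jp n) t Y = jp (Suc n) t Y"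
        using jump_part_Suc[OF Suc[unfolded jp_def]] unfolding jp_def by auto
      ultimately show "continuous_on {0..T} (\<lambda>t. jp (Suc n) t Y)"
        by (rule continuous_on_eq)
    qed
  qed
  have jpSuc: "jp (Suc n) t X = Kc (jp n) t X" if "t \<ge> 0" for n t X
    using jump_part_Suc[OF cjp[of n, unfolded jp_def] that] unfolding jp_def by simp
  have jp0: "jp 0 t X = exp (- qr X * t) * \<phi> 0 X" for t X
    by (simp add: jp_def qr_def)
  have claim: "\<forall>t\<ge>0. \<forall>X. \<phi> t X = (\<Sum>n<N. jp n t X) + (Kc ^^ N) \<phi> t X" for N
  proof (induction N)
    case 0 then show ?case by simp
  next
    case (Suc N)
    show ?case
    proof (intro allI impI)
      fix t :: real and X assume t: "t \<ge> 0"
      have "\<phi> t X = jp 0 t X + Kc \<phi> t X" using VC(1)[OF der t] jp0 by simp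
      also have "Kc \<phi> t X = Kc (\<lambda>t Y. (\<Sum>n<N. jp n t Y) + (Kc ^^ N) \<phi> t Y) t X"
        by (rule Kc_cong) (use Suc.IH in auto)
      also have "\<dots> = Kc (\<lambda>t Y. \<Sum>n<N. jp n t Y) t X + Kc ((Kc ^^ N) \<phi>) t X"
        by (rule Kc_add) (auto intro: cont_sum cjp cont_pow c\<phi>)
      also have "Kc (\<lambda>t Y. \<Sum>n<N. jp n t Y) t X = (\<Sum>n<N. jp (Suc n) t X)"
        using Kc_sum[of N jp t X] cjp jpSuc[OF t] by simp
      finally show "\<phi> t X = (\<Sum>n<Suc N. jp n t X) + (Kc ^^ Suc N) \<phi> t X"
        by (simp add: sum.lessThan_Suc_shift del: sum.lessThan_Suc)
    qed
  qed
  have bound: "\<forall>t\<ge>0. \<forall>X. 0 \<le> (Kc ^^ N) \<phi> t X \<and> (Kc ^^ N) \<phi> t X \<le> Qn N t X" for N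
  proof (induction N)
    case 0 then show ?case using bnd by (simp add: Qn_def)
  next
    case (Suc N)
    show ?case
    proof (intro allI impI conjI)
      fix t :: real and X assume t: "t \<ge> 0"
      have "Kc (\<lambda>t Y. 0) t X \<le> Kc ((Kc ^^ N) \<phi>) t X"
        by (rule Kc_mono) (use Suc.IH in \<open>auto intro: cont_const cont_pow c\<phi>\<close>)
      then show "0 \<le> (Kc ^^ Suc N) \<phi> t X" by (simp add: Kc_zero)
      have "Kc ((Kc ^^ N) \<phi>) t X \<le> Kc (Qn N) t X"
        by (rule Kc_mono) (use Suc.IH in \<open>auto intro: cont_Qn cont_pow c\<phi>\<close>)
      then show "(Kc ^^ Suc N) \<phi> t X \<le> Qn (Suc N) t X" by (simp add: Qn_Suc)
    qed
  qed
  have R0: "(\<lambda>N. (Kc ^^ N) \<phi> t X) \<longlonglongrightarrow> 0"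
    by (rule tendsto_sandwich[OF _ _ tendsto_const Qn_tendsto[OF s t, of X]]) (use bound t in auto)
  have "(\<lambda>N. \<phi> t X - (Kc ^^ N) \<phi> t X) \<longlonglongrightarrow> \<phi> t X - 0"
    by (intro tendsto_diff tendsto_const R0)
  moreover have "\<And>N. \<phi> t X - (Kc ^^ N) \<phi> t X = (\<Sum>n<N. jp n t X)"
    using claim t by (simp add: algebra_simps)
  ultimately have "(\<lambda>N. \<Sum>n<N. jp n t X) \<longlonglongrightarrow> \<phi> t X" by simp
  then show ?thesis unfolding sums_def jp_def .
qed

end

lemma Hrec_bounds: "0 \<le> v \<Longrightarrow> v \<le> 1 \<Longrightarrow> 0 \<le> Hrec T v \<and> Hrec T v \<le> 1"
proof (induction T)
  case (Leaf n) then show ?case by (simp add: power_le_one)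
next
  case (Node a b c)
  then have ha: "0 \<le> Hrec a v" "Hrec a v \<le> 1" and hb: "0 \<le> Hrec b v" "Hrec b v \<le> 1"
    and hc: "0 \<le> Hrec c v" "Hrec c v \<le> 1" by auto
  have "comb (Hrec b v) (Hrec c v) = 1 - (1 - Hrec b v) * (1 - Hrec c v)" by (simp add: comb_def algebra_simps)
  moreover have "0 \<le> (1 - Hrec b v) * (1 - Hrec c v)" "(1 - Hrec b v) * (1 - Hrec c v) \<le> 1"
    using hb hc by (auto intro: mult_le_one)
  ultimately have "0 \<le> comb (Hrec b v) (Hrec c v)" "comb (Hrec b v) (Hrec c v) \<le> 1" by auto
  then show ?case using ha by (auto intro: mult_le_one)
qed

lemma H_bounds: "0 \<le> v \<Longrightarrow> v \<le> 1 \<Longrightarrow> 0 \<le> H X v \<and> H X v \<le> 1"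
  by (cases X) (auto simp: H_tree_Hrec Hrec_bounds)

lemma no_cross:
  fixes w w' :: "real \<Rightarrow> real"
  assumes t1: "t1 \<ge> 0" and cont: "continuous_on {0..t1} w" and w0: "w 0 \<le> 0"
    and der: "\<And>t. 0 < t \<Longrightarrow> t < t1 \<Longrightarrow> w t > 0 \<Longrightarrow> (w has_real_derivative w' t) (at t)"
    and dle: "\<And>t. 0 < t \<Longrightarrow> t < t1 \<Longrightarrow> w t > 0 \<Longrightarrow> w' t \<le> L * w t"
  shows "w t1 \<le> 0"
proof (rule ccontr)
  assume "\<not> w t1 \<le> 0"
  then have wt1: "w t1 > 0" by simp
  define A where "A = {0..t1} \<inter> w -` {..0}"
  have clA: "closed A" unfolding A_def
    by (rule continuous_closed_preimage[OF cont]) auto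
  have A0: "0 \<in> A" using w0 t1 by (simp add: A_def)
  have bdd: "bdd_above A" unfolding A_def by (rule bdd_aboveI[of _ t1]) auto
  define t0 where "t0 = Sup A"
  have t0A: "t0 \<in> A" unfolding t0_def by (rule closed_contains_Sup[OF _ bdd clA]) (use A0 in auto)
  then have t0: "0 \<le> t0" "t0 \<le> t1" "w t0 \<le> 0" by (auto simp: A_def)
  have lt: "t0 < t1" using t0 wt1 by (metis order_le_less not_le)
  have pos: "w x > 0" if "t0 < x" "x \<le> t1" for x
  proof (rule ccontr)
    assume "\<not> w x > 0"
    then have "x \<in> A" using that t0 by (auto simp: A_def)
    then have "x \<le> t0" unfolding t0_def by (rule cSup_upper[OF _ bdd])
    then show False using that by simp
  qed
  define g where "g t = exp (- L * t) * w t" for t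
  have gd: "(g has_real_derivative (exp (- L * x) * w' x - L * exp (- L * x) * w x)) (at x)"
    if "t0 < x" "x < t1" for x
  proof -
    have dw: "(w has_real_derivative w' x) (at x)" using der[of x] pos[of x] that t0 by auto
    show ?thesis unfolding g_def
      by (rule DERIV_cong[OF DERIV_mult[OF DERIV_chain2[OF DERIV_exp, of "\<lambda>t. - L * t"] dw]])
         (auto intro!: derivative_eq_intros simp: algebra_simps)
  qed
  have gc: "continuous_on {t0..t1} g" unfolding g_def
    by (intro continuous_intros continuous_on_subset[OF cont]) (use t0 in auto)
  obtain l z where z: "t0 < z" "z < t1" and dz: "DERIV g z :> l" and eq: "g t1 - g t0 = (t1 - t0) * l"
  proof -
    have "\<And>x. t0 < x \<Longrightarrow> x < t1 \<Longrightarrow> g differentiable (at x)"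
      using gd real_differentiable_def by blast
    then show ?thesis using MVT[OF lt gc] that by blast
  qed
  have "l = exp (- L * z) * w' z - L * exp (- L * z) * w z"
    using DERIV_unique[OF dz gd[OF z]] .
  also have "\<dots> = exp (- L * z) * (w' z - L * w z)" by (simp add: algebra_simps)
  also have "\<dots> \<le> 0" using dle[of z] z t0 pos[of z] by (intro mult_nonneg_nonpos) auto
  finally have "(t1 - t0) * l \<le> 0" using lt by (simp add: mult_nonneg_nonpos)
  then have "g t1 \<le> g t0" using eq by simp
  moreover have "g t0 \<le> 0" unfolding g_def using t0 by (simp add: mult_nonneg_nonpos)
  moreover have "g t1 > 0" unfolding g_def using wt1 by simp
  ultimately show False by simp
qed


lemma ode_invariant:
  fixes s \<gamma> u \<nu>0 \<nu>1 y0 :: real and y :: "real \<Rightarrow> real"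
  assumes "s > 0" and "\<gamma> \<ge> 0" and "u > 0" and "\<nu>0 \<ge> 0" and "\<nu>1 \<ge> 0" and "\<nu>0 + \<nu>1 = 1"
    and "y0 \<in> {0..1}"
    and "y 0 = y0"
    and der: "\<And>t. t \<ge> 0 \<Longrightarrow> (y has_real_derivative
            (- y t * (1 - y t) * (s + \<gamma> * (1 - y t)) + u * \<nu>1 * (1 - y t) - u * \<nu>0 * y t))
            (at t within {0..})"
    and t1: "t1 \<ge> 0"
  shows "0 \<le> y t1 \<and> y t1 \<le> 1"
proof -
  let ?F = "\<lambda>v. - v * (1 - v) * (s + \<gamma> * (1 - v)) + u * \<nu>1 * (1 - v) - u * \<nu>0 * v"
  have cont: "continuous_on {0..t1} y"
    by (rule DERIV_continuous_on[of _ _ "\<lambda>t. ?F (y t)"], rule has_field_derivative_subset[OF der]) auto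
  have dat: "(y has_real_derivative ?F (y t)) (at t)" if "0 < t" for t
  proof -
    have "(y has_real_derivative ?F (y t)) (at t within {0<..})"
      by (rule has_field_derivative_subset[OF der]) (use that in auto)
    then show ?thesis using at_within_open[of t "{0<..}"] that by simp
  qed
  obtain M where M: "\<And>t. t \<in> {0..t1} \<Longrightarrow> \<bar>y t\<bar> \<le> M"
  proof -
    have "compact (y ` {0..t1})" by (rule compact_continuous_image[OF cont compact_Icc])
    then have "bounded (y ` {0..t1})" by (rule compact_imp_bounded)
    then obtain a where "\<forall>x\<in>y ` {0..t1}. \<bar>x\<bar> \<le> a" unfolding bounded_real by blast
    then show ?thesis using that[of a] by auto
  qed
  have up: "y t1 - 1 \<le> 0"
  proof (rule no_cross[where w="\<lambda>t. y t - 1" and w'="\<lambda>t. ?F (y t)" and L="M * s"])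
    show "continuous_on {0..t1} (\<lambda>t. y t - 1)" by (intro continuous_intros cont)
    show "y 0 - 1 \<le> 0" using assms by simp
    fix t assume t: "0 < t" "t < t1" "y t - 1 > 0"
    show "((\<lambda>t. y t - 1) has_real_derivative ?F (y t)) (at t)"
      using DERIV_diff[OF dat[OF t(1)] DERIV_const[of 1]] by simp
    let ?v = "y t"
    have n1: "\<nu>1 = 1 - \<nu>0" using assms(6) by simp
    have Fe: "?F ?v = (?v - 1) * (?v * (s + \<gamma> * (1 - ?v)) - u) - u * \<nu>0"
      unfolding n1 by (simp add: algebra_simps)
    have Mv: "?v \<le> M" using M[of t] t by auto
    have "?v * (\<gamma> * (1 - ?v)) \<le> 0" using t assms(2) by (intro mult_nonneg_nonpos) auto
    moreover have "?v * s \<le> M * s" using Mv assms(1) by (intro mult_right_mono) auto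
    ultimately have "?v * (s + \<gamma> * (1 - ?v)) - u \<le> M * s" using assms(3) by (simp add: algebra_simps)
    then have "(?v - 1) * (?v * (s + \<gamma> * (1 - ?v)) - u) \<le> (?v - 1) * (M * s)"
      using t by (intro mult_left_mono) auto
    then show "?F ?v \<le> M * s * (?v - 1)" using Fe assms(3,4)
      by (simp add: algebra_simps) (smt (verit) mult_nonneg_nonneg)
  qed (use t1 in auto)
  have low: "- y t1 \<le> 0"
  proof (rule no_cross[where w="\<lambda>t. - y t" and w'="\<lambda>t. - ?F (y t)" and L=0])
    show "continuous_on {0..t1} (\<lambda>t. - y t)" by (intro continuous_intros cont)
    show "- y 0 \<le> 0" using assms by simp
    fix t assume t: "0 < t" "t < t1" "- y t > 0"
    show "((\<lambda>t. - y t) has_real_derivative - ?F (y t)) (at t)"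
      using DERIV_minus[OF dat[OF t(1)]] by simp
    let ?v = "y t"
    have n0: "\<nu>0 = 1 - \<nu>1" using assms(6) by simp
    have Fe: "- ?F ?v = ?v * ((1 - ?v) * (s + \<gamma> * (1 - ?v))) + u * ?v - u * \<nu>1"
      unfolding n0 by (simp add: algebra_simps)
    have "?v * ((1 - ?v) * (s + \<gamma> * (1 - ?v))) \<le> 0"
      using t assms(1,2) by (intro mult_nonpos_nonneg mult_nonneg_nonneg) auto
    moreover have "u * ?v \<le> 0" using t assms(3) by (intro mult_nonneg_nonpos) auto
    moreover have "u * \<nu>1 \<ge> 0" using assms(3,5) by simp
    ultimately show "- ?F ?v \<le> 0 * - ?v" using Fe by linarith
  qed (use t1 in auto)
  show ?thesis using up low by simp
qed

theorem theorem2p25: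
  fixes s \<gamma> u \<nu>0 \<nu>1 y0 :: real and y :: "real \<Rightarrow> real"
  assumes "s > 0" and "\<gamma> \<ge> 0" and "u > 0" and "\<nu>0 \<ge> 0" and "\<nu>1 \<ge> 0" and "\<nu>0 + \<nu>1 = 1"
    and "y0 \<in> {0..1}"
    and "y 0 = y0"
    and "\<And>t. t \<ge> 0 \<Longrightarrow> (y has_real_derivative
            (- y t * (1 - y t) * (s + \<gamma> * (1 - y t)) + u * \<nu>1 * (1 - y t) - u * \<nu>0 * y t))
            (at t within {0..})"
  shows "(\<forall>X t. t \<ge> 0 \<longrightarrow> H X (y t) = expect s \<gamma> u \<nu>0 \<nu>1 (\<lambda>Z. H Z y0) t X)
       \<and> (\<forall>t. t \<ge> 0 \<longrightarrow> y t = expect s \<gamma> u \<nu>0 \<nu>1 (\<lambda>Z. H Z y0) t (Some (Leaf 1)))"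
proof -
  interpret asg s \<gamma> u \<nu>0 \<nu>1 by unfold_locales (use assms in auto)
  define \<phi> where "\<phi> t X = H X (y t)" for t X
  have yb: "0 \<le> y t \<and> y t \<le> 1" if "t \<ge> 0" for t
    by (rule ode_invariant[OF assms that])
  have der: "((\<lambda>t. \<phi> t Y) has_real_derivative (Sf \<phi> t Y - qr Y * \<phi> t Y)) (at t within {0..})"
    if t: "t \<ge> 0" for Y t
  proof (cases Y)
    case None
    then show ?thesis by (simp add: \<phi>_def Sf_def tr_def qr_None)
  next
    case (Some T)
    have yd: "(y has_real_derivative Fode s \<gamma> u \<nu>0 \<nu>1 (y t)) (at t within {0..})"
      using assms(9)[OF t] by (simp add: Fode_def)
    have "((\<lambda>t. Hrec T (y t)) has_real_derivative Hd T (y t) * Fode s \<gamma> u \<nu>0 \<nu>1 (y t)) (at t within {0..})"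
      by (rule DERIV_chain2[OF Hrec_deriv yd])
    moreover have "Hd T (y t) * Fode s \<gamma> u \<nu>0 \<nu>1 (y t) = Sf \<phi> t Y - qr Y * \<phi> t Y"
    proof -
      have "sum_list (map (\<lambda>(a, Y). a * H Y (y t)) (transitions s \<gamma> u \<nu>0 \<nu>1 (Some T)))
         - total_rate s \<gamma> u \<nu>0 \<nu>1 (Some T) * Hrec T (y t) = Hd T (y t) * Fode s \<gamma> u \<nu>0 \<nu>1 (y t)"
        by (rule generator_identity)
      then show ?thesis by (simp add: Some Sf_def tr_def qr_def \<phi>_def H_tree_Hrec)
    qed
    ultimately show ?thesis by (simp add: Some \<phi>_def H_tree_Hrec)
  qed
  have bnd: "0 \<le> \<phi> t Y \<and> \<phi> t Y \<le> 1" if "t \<ge> 0" for t Y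
    unfolding \<phi>_def using H_bounds yb[OF that] by blast
  have main: "H X (y t) = expect s \<gamma> u \<nu>0 \<nu>1 (\<lambda>Z. H Z y0) t X" if t: "t \<ge> 0" for X t
  proof -
    have "(\<lambda>n. jump_part s \<gamma> u \<nu>0 \<nu>1 n (\<lambda>Y. \<phi> 0 Y) t X) sums \<phi> t X"
      by (rule repr[OF assms(1) der bnd t])
    moreover have "(\<lambda>Y. \<phi> 0 Y) = (\<lambda>Z. H Z y0)" using assms(8) by (simp add: \<phi>_def)
    ultimately show ?thesis unfolding expect_def \<phi>_def by (simp add: sums_iff)
  qed
  show ?thesis
  proof (intro conjI allI impI)
    fix X t assume "(t::real) \<ge> 0"
    then show "H X (y t) = expect s \<gamma> u \<nu>0 \<nu>1 (\<lambda>Z. H Z y0) t X" by (rule main)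
  next
    fix t assume "(t::real) \<ge> 0"
    then have "H (Some (Leaf 1)) (y t) = expect s \<gamma> u \<nu>0 \<nu>1 (\<lambda>Z. H Z y0) t (Some (Leaf 1))"
      by (rule main)
    then show "y t = expect s \<gamma> u \<nu>0 \<nu>1 (\<lambda>Z. H Z y0) t (Some (Leaf 1))"
      by (simp add: H_tree_Hrec)
  qed
qed

end
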